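(* Let $n$ be a positive integer, $a_1,\dots,a_n\in\mathbb{R}$ and $k>0$. Let $F_{n,k}(s)=\prod_{j=1}^{n}(s+ia_j)^{-k}$ and let $f_{n,k}(t)=\mathcal{L}^{-1}(F_{n,k})(t)$ be its inverse Laplace transform. Then \[|f_{n,k}(t)|\le\frac{t^{nk-1}}{\Gamma(nk)}\qquad\text{for all }t\in(0,\infty).\]
   Context: $\mathcal{L}(f)(s)=\int_0^\infty e^{-st}f(t)\,dt$; powers $(s+ia_j)^{-k}$ are principal branches for $\mathrm{Re}\,s>0$. *)

theory Defs
  imports "HOL-Analysis.Analysis"
begin

text \<open>F_{n,k}(s) = prod_{j=1}^n (s + i a_j)^(-k), principal branch (complex powr uses Ln).\<close>
definition F_nk :: "nat \<Rightarrow> real \<Rightarrow> (nat \<Rightarrow> real) \<Rightarrow> complex \<Rightarrow> complex" where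
  "F_nk n k a s = (\<Prod>j\<in>{1..n}. (s + \<i> * of_real (a j)) powr (- of_real k))"

definition is_inverse_laplace :: "(real \<Rightarrow> complex) \<Rightarrow> (complex \<Rightarrow> complex) \<Rightarrow> bool" where
  "is_inverse_laplace f F \<longleftrightarrow> continuous_on {0<..} f \<and>
     (\<forall>s. Re s > 0 \<longrightarrow>
        (\<lambda>t. exp (- s * of_real t) * f t) absolutely_integrable_on {0<..} \<and>
        integral {0<..} (\<lambda>t. exp (- s * of_real t) * f t) = F s)"

end

theory Submission imports Defs "HOL-Complex_Analysis.Complex_Analysis" "HOL-Probability.Distributions" "HOL-Real_Asymp.Real_Asymp" begin

lemma exp_ge_pow_fact:
  fixes x :: real assumes "x \<ge> 0"
  shows "x ^ m / fact m \<le> exp x"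
proof -
  have s: "(\<lambda>n. x^n /\<^sub>R fact n) sums exp x" by (rule exp_converges)
  have "sum (\<lambda>n. x^n /\<^sub>R fact n) {m} \<le> suminf (\<lambda>n. x^n /\<^sub>R fact n)"
    by (rule sum_le_suminf) (use s assms in \<open>auto simp: sums_iff\<close>)
  thus ?thesis using s by (simp add: sums_iff divide_inverse mult.commute)
qed

lemma pow_exp_bound:
  fixes x c :: real assumes "x \<ge> 0" "c > 0"
  shows "x ^ m * exp (-c*x) \<le> fact m / c ^ m"
proof -
  have "(c*x)^m / fact m \<le> exp (c*x)" using assms by (intro exp_ge_pow_fact) simp
  hence "c^m * x^m \<le> fact m * exp (c*x)" by (simp add: field_simps power_mult_distrib)
  hence "c^m * (x^m * exp (-c*x)) \<le> fact m"
    by (simp add: exp_minus field_simps)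
  thus ?thesis using assms by (simp add: field_simps mult.commute)
qed

lemma norm_exp_taylor2:
  fixes w :: complex
  shows "norm (exp w - 1 - w) \<le> norm w ^ 2 * exp (norm w)"
proof -
  have e: "exp w - 1 - w = (\<Sum>n. inverse (fact (n + 2)) *\<^sub>R (w ^ (n + 2)))"
    using exp_first_two_terms[of w] by simp
  have s1: "summable (\<lambda>n. norm (w ^ (n+2) /\<^sub>R fact (n + 2)))"
    using summable_norm_exp[of w] by (subst summable_iff_shift) 
  have s2: "summable (\<lambda>n. norm w ^ 2 * (norm w ^ n /\<^sub>R fact n))"
    using summable_norm_exp[of w] by (intro summable_mult) (simp add: norm_power)
  have "norm (exp w - 1 - w) \<le> (\<Sum>n. norm (inverse (fact (n + 2)) *\<^sub>R (w ^ (n + 2))))"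
    unfolding e by (rule summable_norm) (use s1 in \<open>simp add: divide_inverse\<close>)
  also have "\<dots> \<le> (\<Sum>n. norm w ^ 2 * (norm w ^ n /\<^sub>R fact n))"
  proof (rule suminf_le)
    fix n
    have "fact n \<le> (fact (n+2) :: real)" by (intro fact_mono) simp
    hence "norm w ^ (n+2) / fact (n+2) \<le> norm w ^ (n+2) / fact n"
      by (intro divide_left_mono) auto
    moreover have "norm (inverse (fact (n + 2)) *\<^sub>R (w ^ (n + 2))) = norm w ^ (n+2) / fact (n+2)"
      by (simp add: norm_power norm_mult divide_inverse mult.commute)
    moreover have "norm w ^ 2 * (norm w ^ n /\<^sub>R fact n) = norm w ^ (n+2) / fact n"
      by (simp add: power_add power2_eq_square divide_inverse mult.commute)
    ultimately show "norm (inverse (fact (n + 2)) *\<^sub>R (w ^ (n + 2))) \<le> norm w ^ 2 * (norm w ^ n /\<^sub>R fact n)"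
      by simp
  qed (use s1 s2 in \<open>auto simp: divide_inverse\<close>)
  also have "\<dots> = norm w ^ 2 * exp (norm w)"
    using exp_converges[of "norm w"] by (subst suminf_mult) (auto simp: sums_iff)
  finally show ?thesis .
qed

lemma Re_pos_not_nonpos: "Re z > 0 \<Longrightarrow> z \<notin> \<real>\<^sub>\<le>\<^sub>0"
  by (auto simp: complex_nonpos_Reals_iff)

lemma open_halfplane: "open {z::complex. Re z > 0}"
  by (simp add: open_halfspace_Re_gt)

lemma hder:
  fixes b k :: real
  assumes "Re s > 0"
  shows "(deriv ^^ j) (\<lambda>s. (s + \<i> * of_real b) powr (- of_real k)) s =
    (-1)^j * of_real (pochhammer k j) * (s + \<i> * of_real b) powr (- of_real k - of_nat j)"
  using assms
proof (induction j arbitrary: s)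
  case 0
  then show ?case by simp
next
  case (Suc j)
  define g where "g = (\<lambda>s. (s + \<i> * of_real b) powr (- of_real k))"
  define E where "E = (\<lambda>s. (-1)^j * of_real (pochhammer k j) * (s + \<i> * of_real b) powr (- of_real k - of_nat j))"
  have ev: "eventually (\<lambda>z. (deriv ^^ j) g z = E z) (nhds s)"
  proof -
    have "eventually (\<lambda>z. z \<in> {z. Re z > 0}) (nhds s)"
      using Suc.prems open_halfplane by (intro eventually_nhds_in_open) auto
    thus ?thesis by eventually_elim (use Suc.IH in \<open>auto simp: g_def E_def\<close>)
  qed
  have nz: "s + \<i> * of_real b \<notin> \<real>\<^sub>\<le>\<^sub>0" using Suc.prems by (intro Re_pos_not_nonpos) simp
  have D: "(E has_field_derivative (-1)^j * of_real (pochhammer k j) *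
        ((- of_real k - of_nat j) * (s + \<i> * of_real b) powr (- of_real k - of_nat j - 1))) (at s)"
    unfolding E_def using nz
    by (auto intro!: derivative_eq_intros)
  have "(deriv ^^ Suc j) g s = deriv ((deriv ^^ j) g) s" by simp
  also have "\<dots> = deriv E s" by (rule deriv_cong_ev[OF ev refl])
  also have "\<dots> = (-1)^j * of_real (pochhammer k j) *
        ((- of_real k - of_nat j) * (s + \<i> * of_real b) powr (- of_real k - of_nat j - 1))"
    by (rule DERIV_imp_deriv[OF D])
  also have "\<dots> = (-1)^Suc j * of_real (pochhammer k (Suc j)) * (s + \<i> * of_real b) powr (- of_real k - of_nat (Suc j))"
    by (simp add: pochhammer_Suc algebra_simps)
  finally show ?case by (simp add: g_def)
qed

lemma F_nk_Suc: "F_nk (Suc n) k a = (\<lambda>s. F_nk n k a s * (s + \<i> * of_real (a (Suc n))) powr (- of_real k))"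
  by (auto simp: F_nk_def fun_eq_iff prod.nat_ivl_Suc' mult.commute)

lemma F_nk_holo: "F_nk n k a holomorphic_on {z. Re z > 0}"
  unfolding F_nk_def
  by (intro holomorphic_intros) (auto intro!: Re_pos_not_nonpos)

lemma poch_nonneg: "(0::real) \<le> x \<Longrightarrow> 0 \<le> pochhammer x m"
  by (simp add: pochhammer_prod prod_nonneg)

lemma hder_bound:
  fixes b k \<sigma> :: real
  assumes "\<sigma> > 0" "k \<ge> 0"
  shows "norm ((deriv ^^ j) (\<lambda>s. (s + \<i> * of_real b) powr (- of_real k)) (of_real \<sigma>)) \<le>
    pochhammer k j * \<sigma> powr (- k - real j)"
proof -
  have "norm ((deriv ^^ j) (\<lambda>s. (s + \<i> * of_real b) powr (- of_real k)) (of_real \<sigma>)) =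
     pochhammer k j * norm (of_real \<sigma> + \<i> * of_real b) powr (- k - real j)"
    using assms poch_nonneg[of k j] by (subst hder) (auto simp: norm_mult norm_power norm_powr_real_powr')
  also have "\<dots> \<le> pochhammer k j * \<sigma> powr (- k - real j)"
  proof (rule mult_left_mono)
    have "\<sigma> \<le> norm (of_real \<sigma> + \<i> * of_real b)"
      using complex_Re_le_cmod[of "of_real \<sigma> + \<i> * of_real b"] by simp
    thus "norm (of_real \<sigma> + \<i> * of_real b) powr (- k - real j) \<le> \<sigma> powr (- k - real j)"
      using assms by (intro powr_mono2') auto
  qed (use assms in \<open>auto simp: poch_nonneg\<close>)
  finally show ?thesis .
qed

lemma Fder_bound:
  fixes \<sigma> k :: real
  assumes "\<sigma> > 0" "k \<ge> 0"
  shows "norm ((deriv ^^ m) (F_nk n k a) (of_real \<sigma>)) \<le>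
    pochhammer (real n * k) m * \<sigma> powr (- (real n * k) - real m)"
proof (induction n arbitrary: m)
  case 0
  have "F_nk 0 k a = (\<lambda>s. 1)" by (simp add: F_nk_def fun_eq_iff)
  then show ?case using assms by (cases m) (auto simp: pochhammer_0_left)
next
  case (Suc n)
  define h where "h = (\<lambda>s. (s + \<i> * of_real (a (Suc n))) powr (- of_real k))"
  have hh: "h holomorphic_on {z. Re z > 0}"
    unfolding h_def by (intro holomorphic_intros) (auto intro!: Re_pos_not_nonpos)
  have Fh: "F_nk (Suc n) k a = (\<lambda>s. F_nk n k a s * h s)" by (simp add: F_nk_Suc h_def)
  have "(deriv ^^ m) (F_nk (Suc n) k a) (of_real \<sigma>) =
      (\<Sum>i = 0..m. of_nat (m choose i) * (deriv ^^ i) (F_nk n k a) (of_real \<sigma>) * (deriv ^^ (m-i)) h (of_real \<sigma>))"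
    unfolding Fh
    by (rule higher_deriv_mult[OF F_nk_holo hh open_halfplane]) (use assms in simp)
  also have "norm \<dots> \<le> (\<Sum>i = 0..m. real (m choose i) * (pochhammer (real n * k) i * \<sigma> powr (- (real n * k) - real i))
      * (pochhammer k (m-i) * \<sigma> powr (- k - real (m-i))))"
    apply (rule order.trans[OF norm_sum sum_mono])
    apply (simp only: norm_mult norm_of_nat)
    apply (intro mult_mono mult_nonneg_nonneg Suc.IH)
    using hder_bound[OF assms, where b="a (Suc n)"] by (auto simp: h_def poch_nonneg assms simp del: of_nat_diff)
  also have "\<dots> = (\<Sum>i = 0..m. real (m choose i) * pochhammer (real n * k) i * pochhammer k (m-i)) *
       \<sigma> powr (- (real (Suc n) * k) - real m)"
    unfolding sum_distrib_right
  proof (rule sum.cong[OF refl])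
    fix i assume i: "i \<in> {0..m}"
    have "\<sigma> powr (- (real n * k) - real i) * \<sigma> powr (- k - real (m-i)) = \<sigma> powr (- (real (Suc n) * k) - real m)"
      using i assms by (simp add: powr_add[symmetric] of_nat_diff algebra_simps)
    thus "real (m choose i) * (pochhammer (real n * k) i * \<sigma> powr (- (real n * k) - real i)) *
         (pochhammer k (m - i) * \<sigma> powr (- k - real (m - i))) =
         real (m choose i) * pochhammer (real n * k) i * pochhammer k (m - i) * \<sigma> powr (- (real (Suc n) * k) - real m)"
      by (metis (no_types, lifting) mult.assoc mult.left_commute)
  qed
  also have "(\<Sum>i = 0..m. real (m choose i) * pochhammer (real n * k) i * pochhammer k (m-i)) = pochhammer (real (Suc n) * k) m"
    using pochhammer_binomial_sum[of "real n * k" k m] by (simp add: atLeast0AtMost algebra_simps)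
  finally show ?case .
qed


lemma two_ln_le: "(x::real) > 0 \<Longrightarrow> 2 * ln x \<le> x"
proof -
  assume x: "x > 0"
  have sq: "sqrt x > 0" "sqrt x ^ 2 = x" using x by auto
  have "ln x = 2 * ln (sqrt x)" using x by (simp add: ln_sqrt)
  also have "\<dots> \<le> 2 * (sqrt x - 1)" using ln_le_minus_one[OF sq(1)] by simp
  finally have "2 * ln x \<le> 4 * sqrt x - 4" by simp
  also have "\<dots> \<le> x"
  proof -
    have "0 \<le> (sqrt x - 2)^2" by simp
    thus ?thesis using sq(2) by (simp add: power2_eq_square algebra_simps)
  qed
  finally show ?thesis .
qed

lemma ln_one_minus_lt: "0 < d \<Longrightarrow> d < (1::real) \<Longrightarrow> ln (1 - d) + d < 0"
proof -
  assume d: "0 < d" "d < 1"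
  have s: "sqrt (1 - d) > 0" using d by simp
  have "ln (1 - d) = 2 * ln (sqrt (1 - d))" using d by (simp add: ln_sqrt)
  also have "\<dots> \<le> 2 * (sqrt (1 - d) - 1)" using ln_le_minus_one[OF s] by simp
  also have "sqrt (1 - d) < 1 - d/2"
  proof -
    have "sqrt (1 - d) < sqrt ((1 - d/2)^2)"
      using d by (subst real_sqrt_less_iff) (simp add: power2_eq_square algebra_simps)
    thus ?thesis using d by simp
  qed
  hence "2 * (sqrt (1 - d) - 1) < - d" by simp
  finally show ?thesis by simp
qed

lemma L_bound:
  fixes x d :: real
  assumes x: "x > 0" and d: "0 < d" "d < 1" and xd: "\<bar>x - 1\<bar> \<ge> d"
  shows "ln x + 1 - x \<le> max (ln (1 + d) - d) (ln (1 - d) + d)"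
proof (cases "x \<ge> 1")
  case True
  hence x1: "x \<ge> 1 + d" using xd by simp
  have "ln x = ln (1 + d) + ln (x / (1 + d))" using d x by (simp add: ln_div)
  also have "ln (x / (1 + d)) \<le> x / (1 + d) - 1" using x d by (intro ln_le_minus_one) simp
  finally have h1: "ln x + 1 - x \<le> ln (1 + d) - x * d / (1 + d)"
    using d by (simp add: field_simps)
  have h2: "x * d / (1 + d) \<ge> d" using x1 d mult_left_mono[OF x1, of d] by (simp add: field_simps)
  from h1 h2 show ?thesis by (simp add: le_max_iff_disj)
next
  case False
  hence x1: "x \<le> 1 - d" using xd by simp
  have "ln x = ln (1 - d) + ln (x / (1 - d))" using d x by (simp add: ln_div)
  also have "ln (x / (1 - d)) \<le> x / (1 - d) - 1" using x d by (intro ln_le_minus_one) simp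
  finally have "ln x + 1 - x \<le> ln (1 - d) + x * d / (1 - d)"
    using d by (simp add: field_simps)
  also have "x * d / (1 - d) \<le> d" using x1 d x mult_left_mono[OF x1, of d] by (simp add: field_simps)
  finally show ?thesis by simp
qed

definition Kker :: "real \<Rightarrow> nat \<Rightarrow> real \<Rightarrow> real" where
  "Kker t m u = (real m / t) ^ Suc m * u ^ m * exp (- (real m / t) * u) / fact m"

lemma Kker_nonneg: "t > 0 \<Longrightarrow> u > 0 \<Longrightarrow> Kker t m u \<ge> 0"
  by (simp add: Kker_def)

lemma K_bound:
  fixes t u d :: real
  assumes t: "t > 0" and u: "u > 0" and d: "0 < d" "d < 1" and m: "m \<ge> 2"
    and ud: "\<bar>u / t - 1\<bar> \<ge> d"
  shows "Kker t m u * exp (u / t) \<le> (real m / t) * exp 2 * exp ((real m - 2) * max (ln (1 + d) - d) (ln (1 - d) + d))"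
proof -
  define x where "x = u / t"
  have x: "x > 0" using t u by (simp add: x_def)
  define r where "r = max (ln (1 + d) - d) (ln (1 - d) + d)"
  have L: "ln x + 1 - x \<le> r" unfolding r_def using L_bound[OF x d] ud by (simp add: x_def)
  have mm: "real m ^ m / fact m \<le> exp (real m)" by (rule exp_ge_pow_fact) simp
  have E1: "exp (- (real m / t) * u) * exp (u / t) = exp (- (real m - 1) * x)"
    by (subst mult_exp_exp) (rule arg_cong[where f=exp], use t in \<open>simp add: x_def field_simps\<close>)
  have E2: "(real m / t) ^ Suc m * u ^ m = (real m / t) * real m ^ m * x ^ m"
    using t by (simp add: x_def power_divide field_simps)
  have "Kker t m u * exp (u / t) = ((real m / t) ^ Suc m * u ^ m) * (exp (- (real m / t) * u) * exp (u / t)) / fact m"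
    by (simp add: Kker_def)
  also have "\<dots> = (real m / t) * (real m ^ m / fact m) * (x ^ m * exp (- (real m - 1) * x))"
    unfolding E1 E2 by simp
  also have "\<dots> \<le> (real m / t) * exp (real m) * (x ^ m * exp (- (real m - 1) * x))"
    using t x by (intro mult_right_mono mult_left_mono mm) auto
  also have "x ^ m = exp (real m * ln x)" using x by (simp add: exp_of_nat_mult)
  also have "(real m / t) * exp (real m) * (exp (real m * ln x) * exp (- (real m - 1) * x))
      = (real m / t) * exp ((real m - 2) * (ln x + 1 - x) + (2 * ln x + 2 - x))"
    by (simp add: mult_exp_exp algebra_simps)
  also have "\<dots> \<le> (real m / t) * exp ((real m - 2) * r + 2)"
  proof -
    have "(real m - 2) * (ln x + 1 - x) \<le> (real m - 2) * r" using m L by (intro mult_left_mono) auto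
    moreover have "2 * ln x + 2 - x \<le> 2" using two_ln_le[OF x] by simp
    ultimately show ?thesis using t by (intro mult_left_mono) auto
  qed
  also have "\<dots> = (real m / t) * exp 2 * exp ((real m - 2) * r)"
    by (simp add: exp_add)
  finally show ?thesis by (simp add: r_def)
qed

lemma K_int:
  assumes l: "(l::real) > 0"
  shows "((\<lambda>u. l ^ Suc m * u ^ m * exp (- l * u) / fact m) has_integral 1) {0<..}"
proof -
  have E: "(erlang_density m l has_integral 1) UNIV"
  proof (rule nn_integral_has_integral)
    show "(\<integral>\<^sup>+ x. ennreal (erlang_density m l x) \<partial>lborel) = ennreal 1"
      using nn_integral_erlang_ith_moment[OF l, of m 0] by simp
  qed (use l in auto)
  have "((\<lambda>u. if u \<in> {0<..} then l ^ Suc m * u ^ m * exp (- l * u) / fact m else 0) has_integral 1) UNIV"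
    by (rule has_integral_spike_finite[where S="{0}" and f="erlang_density m l", OF _ _ E]) (auto simp: erlang_density_def)
  thus ?thesis by (subst has_integral_restrict_UNIV[symmetric]) simp
qed

lemma K_int': "t > 0 \<Longrightarrow> m > 0 \<Longrightarrow> (Kker t m has_integral 1) {0<..}"
  unfolding Kker_def[abs_def] by (rule K_int) simp

lemma T_lim:
  fixes t r :: real assumes "t > 0" "r < 0"
  shows "(\<lambda>m. (real m / t) * exp 2 * exp ((real m - 2) * r)) \<longlonglongrightarrow> 0"
proof -
  have e: "(real m / t) * exp 2 * exp ((real m - 2) * r) = (exp 2 * exp (-2*r) / t) * (real m * exp r ^ m)" for m
    by (simp add: exp_of_nat_mult[symmetric] mult_exp_exp algebra_simps)
  have "(\<lambda>m. real m * exp r ^ m) \<longlonglongrightarrow> 0"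
    using powser_times_n_limit_0[of "exp r"] assms by simp
  hence "(\<lambda>m. (exp 2 * exp (-2*r) / t) * (real m * exp r ^ m)) \<longlonglongrightarrow> (exp 2 * exp (-2*r) / t) * 0"
    by (intro tendsto_mult tendsto_const)
  moreover have "(\<lambda>m. (real m / t) * exp 2 * exp ((real m - 2) * r)) = (\<lambda>m. (exp 2 * exp (-2*r) / t) * (real m * exp r ^ m))"
    using e by auto
  ultimately show ?thesis by simp
qed

context
  fixes f :: "real \<Rightarrow> complex"
  assumes cont: "continuous_on {0<..} f"
    and AI: "\<And>s. Re s > 0 \<Longrightarrow> (\<lambda>t. exp (- s * of_real t) * f t) absolutely_integrable_on {0<..}"
begin

definition LPhi :: "nat \<Rightarrow> complex \<Rightarrow> complex" where
  "LPhi m s = integral {0<..} (\<lambda>u. of_real u ^ m * exp (- s * of_real u) * f u)"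

lemma AI_weighted:
  assumes "Re s > 0"
  shows "(\<lambda>u. of_real u ^ m * exp (- s * of_real u) * f u) absolutely_integrable_on {0<..}"
proof -
  define \<sigma> where "\<sigma> = Re s / 2"
  have \<sigma>: "\<sigma> > 0" using assms by (simp add: \<sigma>_def)
  define g where "g = (\<lambda>u::real. of_real u ^ m * exp (- (s - of_real \<sigma>) * of_real u))"
  have "(\<lambda>u. g u * (exp (- of_real \<sigma> * of_real u) * f u)) absolutely_integrable_on {0<..}"
  proof (rule absolutely_integrable_bounded_measurable_product[OF bilinear_times])
    show "g \<in> borel_measurable (lebesgue_on {0<..})"
      unfolding g_def by (intro continuous_imp_measurable_on_sets_lebesgue continuous_intros) auto
    show "{0::real<..} \<in> sets lebesgue" by simp
    show "bounded (g ` {0<..})"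
    proof (rule boundedI)
      fix y assume "y \<in> g ` {0<..}"
      then obtain u where u: "u > 0" "y = g u" by auto
      have "norm (g u) = u ^ m * exp (- \<sigma> * u)"
        using u by (simp add: g_def norm_mult norm_power \<sigma>_def algebra_simps)
      also have "\<dots> \<le> fact m / \<sigma> ^ m" using u \<sigma> by (intro pow_exp_bound) auto
      finally show "norm y \<le> fact m / \<sigma> ^ m" using u by simp
    qed
    show "(\<lambda>t. exp (- of_real \<sigma> * of_real t) * f t) absolutely_integrable_on {0<..}"
      using AI[of "of_real \<sigma>"] \<sigma> by simp
  qed
  also have "(\<lambda>u. g u * (exp (- of_real \<sigma> * of_real u) * f u)) = (\<lambda>u. of_real u ^ m * exp (- s * of_real u) * f u)"
  proof -
    have "exp (- (s - of_real \<sigma>) * of_real u) * exp (- of_real \<sigma> * of_real u) = exp (- s * of_real u)" for u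
      by (simp add: exp_add[symmetric] algebra_simps)
    thus ?thesis by (auto simp: g_def fun_eq_iff mult_ac)
  qed
  finally show ?thesis .
qed

lemma I_weighted:
  assumes "Re s > 0"
  shows "(\<lambda>u. of_real u ^ m * exp (- s * of_real u) * f u) integrable_on {0<..}"
  using AI_weighted[OF assms] by (rule set_lebesgue_integral_eq_integral(1))

lemma I_norm_weighted:
  assumes "c > 0"
  shows "(\<lambda>u. u ^ m * exp (- c * u) * norm (f u)) integrable_on {0<..}"
proof -
  have "(\<lambda>u. norm (of_real u ^ m * exp (- of_real c * of_real u) * f u)) integrable_on {0<..}"
    using AI_weighted[of "of_real c" m] assms by (simp add: absolutely_integrable_on_def)
  thus ?thesis
    by (rule integrable_eq) (auto simp: norm_mult norm_power exp_of_real[symmetric])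
qed

lemma Phi_deriv:
  assumes s0: "Re s0 > 0"
  shows "(LPhi m has_field_derivative - LPhi (Suc m) s0) (at s0)"
proof -
  define r where "r = Re s0"
  have r: "r > 0" using s0 by (simp add: r_def)
  define C where "C = integral {0<..} (\<lambda>u. u ^ (m+2) * exp (- (r/2) * u) * norm (f u))"
  have Cint: "(\<lambda>u. u ^ (m+2) * exp (- (r/2) * u) * norm (f u)) integrable_on {0<..}"
    using r by (intro I_norm_weighted) auto
  have key: "norm (LPhi m s - LPhi m s0 - (s - s0) * (- LPhi (Suc m) s0)) \<le> norm (s - s0) ^ 2 * C"
    if s: "norm (s - s0) < r/2" for s
  proof -
    have Res: "Re s > 0"
    proof -
      have "Re s0 - Re s \<le> norm (s - s0)"
        using abs_Re_le_cmod[of "s - s0"] by simp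
      thus ?thesis using s r by (simp add: r_def)
    qed
    have i1: "(\<lambda>u. of_real u ^ m * exp (- s * of_real u) * f u) integrable_on {0<..}"
      using Res by (rule I_weighted)
    have i2: "(\<lambda>u. of_real u ^ m * exp (- s0 * of_real u) * f u) integrable_on {0<..}"
      using s0 by (rule I_weighted)
    have i3: "(\<lambda>u. (s - s0) * (of_real u ^ Suc m * exp (- s0 * of_real u) * f u)) integrable_on {0<..}"
      using s0 by (intro integrable_on_mult_right I_weighted)
    define G where "G = (\<lambda>u. of_real u ^ m * exp (- s * of_real u) * f u
        - of_real u ^ m * exp (- s0 * of_real u) * f u
        + (s - s0) * (of_real u ^ Suc m * exp (- s0 * of_real u) * f u))"
    have Gint: "G integrable_on {0<..}"
      unfolding G_def by (intro integrable_add integrable_diff i1 i2 i3)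
    have "integral {0<..} G = (LPhi m s - LPhi m s0) + integral {0<..} (\<lambda>u. (s - s0) * (of_real u ^ Suc m * exp (- s0 * of_real u) * f u))"
      unfolding G_def LPhi_def
      by (simp only: integral_add[OF integrable_diff[OF i1 i2] i3] integral_diff[OF i1 i2])
    also have "integral {0<..} (\<lambda>u. (s - s0) * (of_real u ^ Suc m * exp (- s0 * of_real u) * f u)) = (s - s0) * LPhi (Suc m) s0"
      unfolding LPhi_def by (rule integral_mult_right)
    finally have "LPhi m s - LPhi m s0 - (s - s0) * (- LPhi (Suc m) s0) = integral {0<..} G"
      by simp
    also have "norm (integral {0<..} G) \<le> integral {0<..} (\<lambda>u. norm (s - s0) ^ 2 * (u ^ (m+2) * exp (- (r/2) * u) * norm (f u)))"
    proof (rule integral_norm_bound_integral[OF Gint])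
      show "(\<lambda>u. norm (s - s0) ^ 2 * (u ^ (m+2) * exp (- (r/2) * u) * norm (f u))) integrable_on {0<..}"
        using Cint by (rule integrable_on_mult_right)
      fix u :: real assume u: "u \<in> {0<..}"
      define w where "w = - (s - s0) * of_real u"
      have "G u = of_real u ^ m * f u * exp (- s0 * of_real u) * (exp w - 1 - w)"
      proof -
        have "exp (- s * of_real u) = exp (- s0 * of_real u) * exp w"
          by (simp add: w_def exp_add[symmetric] algebra_simps)
        thus ?thesis by (simp add: G_def w_def algebra_simps)
      qed
      hence "norm (G u) = u ^ m * norm (f u) * exp (- r * u) * norm (exp w - 1 - w)"
        using u by (simp add: norm_mult norm_power r_def)
      also have "\<dots> \<le> u ^ m * norm (f u) * exp (- r * u) * (norm w ^ 2 * exp (norm w))"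
        using u by (intro mult_left_mono norm_exp_taylor2) auto
      also have "norm w = norm (s - s0) * u" using u by (simp add: w_def norm_mult norm_minus_commute)
      also have "u ^ m * norm (f u) * exp (- r * u) * ((norm (s - s0) * u) ^ 2 * exp (norm (s - s0) * u))
          = norm (s - s0) ^ 2 * (u ^ (m+2) * norm (f u) * exp (- r * u + norm (s - s0) * u))"
        unfolding exp_add by (simp add: power_mult_distrib power_add power2_eq_square algebra_simps)
      also have "\<dots> \<le> norm (s - s0) ^ 2 * (u ^ (m+2) * norm (f u) * exp (- (r/2) * u))"
        using u s by (intro mult_left_mono) (auto intro!: mult_left_mono simp: algebra_simps)
      finally show "norm (G u) \<le> norm (s - s0) ^ 2 * (u ^ (m+2) * exp (- (r/2) * u) * norm (f u))"
        by (simp add: algebra_simps)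
    qed
    also have "\<dots> = norm (s - s0) ^ 2 * C"
      by (simp add: C_def)
    finally show ?thesis .
  qed
  show ?thesis
    unfolding has_field_derivative_iff
  proof (rule LIM_zero_cancel, rule Lim_null_comparison)
    show "eventually (\<lambda>s. norm ((LPhi m s - LPhi m s0) / (s - s0) - - LPhi (Suc m) s0) \<le> norm (s - s0) * C) (at s0)"
      unfolding eventually_at
    proof (intro exI[of _ "r/2"] conjI ballI impI)
      fix s assume "s \<in> UNIV" and "s \<noteq> s0 \<and> dist s s0 < r / 2"
      hence ne: "s \<noteq> s0" and d: "norm (s - s0) < r/2" by (auto simp: dist_norm)
      have "(LPhi m s - LPhi m s0) / (s - s0) - - LPhi (Suc m) s0 = (LPhi m s - LPhi m s0 - (s - s0) * (- LPhi (Suc m) s0)) / (s - s0)"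
        using ne by (simp add: field_simps)
      hence "norm ((LPhi m s - LPhi m s0) / (s - s0) - - LPhi (Suc m) s0) = norm (LPhi m s - LPhi m s0 - (s - s0) * (- LPhi (Suc m) s0)) / norm (s - s0)"
        by (simp add: norm_divide)
      also have "\<dots> \<le> norm (s - s0) ^ 2 * C / norm (s - s0)"
        using key[OF d] ne by (intro divide_right_mono) auto
      also have "\<dots> = norm (s - s0) * C" using ne by (simp add: power2_eq_square)
      finally show "norm ((LPhi m s - LPhi m s0) / (s - s0) - - LPhi (Suc m) s0) \<le> norm (s - s0) * C" .
    qed (use r in auto)
    show "((\<lambda>s. norm (s - s0) * C) \<longlongrightarrow> 0) (at s0)"
      by (rule tendsto_eq_intros refl | simp)+
  qed
qed


lemma Q_integrable:
  assumes t: "t > 0" and m: "m > 0"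
  shows "(\<lambda>u. of_real (Kker t m u) * f u) integrable_on {0<..}"
proof -
  have "(\<lambda>u. of_real ((real m / t) ^ Suc m / fact m) * (of_real u ^ m * exp (- of_real (real m / t) * of_real u) * f u)) integrable_on {0<..}"
    using t m by (intro integrable_on_mult_right I_weighted) simp
  thus ?thesis
    by (rule integrable_eq) (simp add: Kker_def exp_of_real[symmetric] mult_ac)
qed

lemma Q_eq:
  assumes t: "t > 0"
  shows "integral {0<..} (\<lambda>u. of_real (Kker t m u) * f u) = of_real ((real m / t) ^ Suc m / fact m) * LPhi m (of_real (real m / t))"
  unfolding LPhi_def integral_mult_right[symmetric]
  by (rule integral_cong) (simp add: Kker_def exp_of_real[symmetric] mult_ac)

lemma PW:
  assumes t: "t > 0"
  shows "(\<lambda>m. integral {0<..} (\<lambda>u. of_real (Kker t m u) * f u)) \<longlonglongrightarrow> f t"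
proof (rule LIMSEQ_I)
  fix \<epsilon> :: real assume \<epsilon>: "\<epsilon> > 0"
  obtain \<delta>0 where \<delta>0: "\<delta>0 > 0" "\<And>u. u \<in> {0<..} \<Longrightarrow> dist u t < \<delta>0 \<Longrightarrow> dist (f u) (f t) < \<epsilon>/2"
    using cont t \<epsilon> unfolding continuous_on_iff by (metis greaterThan_iff half_gt_zero)
  define \<delta> where "\<delta> = min \<delta>0 (t/2)"
  define d where "d = \<delta> / t"
  have d: "0 < d" "d < 1" using \<delta>0 t by (auto simp: d_def \<delta>_def min_def field_simps)
  define r where "r = max (ln (1 + d) - d) (ln (1 - d) + d)"
  have r: "r < 0" using ln_add_one_self_less_self[OF d(1)] ln_one_minus_lt[OF d] by (simp add: r_def)
  define W where "W = (\<lambda>u. exp (- (1/t) * u) * norm (f u) + exp (- (1/t) * u) * norm (f t))"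
  have Wint: "W integrable_on {0<..}"
  proof -
    have i1: "(\<lambda>u. exp (- (1/t) * u) * norm (f u)) integrable_on {0<..}"
      using I_norm_weighted[of "1/t" 0] t by simp
    have "((\<lambda>u. (1/t) ^ Suc 0 * u ^ 0 * exp (- (1/t) * u) / fact 0) has_integral 1) {0<..}"
      using t by (intro K_int) simp
    hence "(\<lambda>u. (1/t) * exp (- (1/t) * u)) integrable_on {0<..}" by (auto simp: integrable_on_def)
    hence "(\<lambda>u. (t * norm (f t)) * ((1/t) * exp (- (1/t) * u))) integrable_on {0<..}"
      by (rule integrable_on_mult_right)
    hence i2: "(\<lambda>u. exp (- (1/t) * u) * norm (f t)) integrable_on {0<..}"
      by (rule integrable_eq) (use t in simp)
    show ?thesis unfolding W_def by (intro integrable_add i1 i2)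
  qed
  define A where "A = integral {0<..} W"
  have A: "A \<ge> 0" unfolding A_def by (intro integral_nonneg Wint) (auto simp: W_def)
  define T where "T = (\<lambda>m. (real m / t) * exp 2 * exp ((real m - 2) * r))"
  have "T \<longlonglongrightarrow> 0" unfolding T_def by (rule T_lim[OF t r])
  moreover have "\<epsilon> / 2 / (A + 1) > 0" using \<epsilon> A by simp
  ultimately obtain N where N: "\<And>m. m \<ge> N \<Longrightarrow> norm (T m - 0) < \<epsilon> / 2 / (A + 1)"
    using LIMSEQ_D by blast
  show "\<exists>no. \<forall>m\<ge>no. norm (integral {0<..} (\<lambda>u. of_real (Kker t m u) * f u) - f t) < \<epsilon>"
  proof (intro exI allI impI)
    fix m assume m: "m \<ge> max N 2"
    have m0: "m > 0" "m \<ge> 2" using m by auto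
    have Tm: "T m < \<epsilon> / 2 / (A + 1)" "T m \<ge> 0"
      using N[of m] m t by (auto simp: T_def)
    have Kint: "(Kker t m has_integral 1) {0<..}" using K_int' t m0 by simp
    have Kc: "((\<lambda>u. of_real (Kker t m u) * f t) has_integral (of_real 1 * f t)) {0<..}"
      by (intro has_integral_mult_left has_integral_linear[OF Kint bounded_linear_of_real, unfolded o_def])
    have Qi: "(\<lambda>u. of_real (Kker t m u) * f u) integrable_on {0<..}" by (rule Q_integrable[OF t m0(1)])
    have "integral {0<..} (\<lambda>u. of_real (Kker t m u) * f u) - f t =
        integral {0<..} (\<lambda>u. of_real (Kker t m u) * f u - of_real (Kker t m u) * f t)"
    proof -
      have e2: "integral {0<..} (\<lambda>u. of_real (Kker t m u) * f t) = f t" using integral_unique[OF Kc] by simp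
      show ?thesis by (simp only: integral_diff[OF Qi has_integral_integrable[OF Kc]] e2)
    qed
    also have "norm \<dots> \<le> integral {0<..} (\<lambda>u. (\<epsilon>/2) * Kker t m u + T m * W u)"
    proof (rule integral_norm_bound_integral)
      show "(\<lambda>u. of_real (Kker t m u) * f u - of_real (Kker t m u) * f t) integrable_on {0<..}"
        using Kc Qi by (intro integrable_diff) (auto simp: has_integral_integrable)
      show "(\<lambda>u. (\<epsilon>/2) * Kker t m u + T m * W u) integrable_on {0<..}"
        using Kint Wint by (intro integrable_add integrable_on_mult_right) (auto simp: has_integral_integrable)
      fix u :: real assume u: "u \<in> {0<..}"
      have K0: "Kker t m u \<ge> 0" using u t by (intro Kker_nonneg) auto
      have W0: "W u \<ge> 0" by (simp add: W_def)
      have nm: "norm (of_real (Kker t m u) * f u - of_real (Kker t m u) * f t) = Kker t m u * norm (f u - f t)"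
        using K0 by (simp add: right_diff_distrib[symmetric] norm_mult)
      show "norm (of_real (Kker t m u) * f u - of_real (Kker t m u) * f t) \<le> (\<epsilon>/2) * Kker t m u + T m * W u"
      proof (cases "\<bar>u - t\<bar> < \<delta>")
        case True
        hence "dist u t < \<delta>0" by (simp add: dist_real_def \<delta>_def)
        hence "norm (f u - f t) < \<epsilon>/2" using \<delta>0(2)[OF u] by (simp add: dist_norm)
        hence "Kker t m u * norm (f u - f t) \<le> Kker t m u * (\<epsilon>/2)" using K0 by (intro mult_left_mono) auto
        moreover have "T m * W u \<ge> 0" using Tm W0 by simp
        ultimately show ?thesis unfolding nm by (simp add: mult.commute)
      next
        case False
        have ud: "\<bar>u / t - 1\<bar> \<ge> d"
        proof -
          have "u / t - 1 = (u - t) / t" using t by (simp add: diff_divide_distrib)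
          hence "\<bar>u / t - 1\<bar> = \<bar>u - t\<bar> / t" using t by simp
          moreover have "\<delta> / t \<le> \<bar>u - t\<bar> / t" using False t by (intro divide_right_mono) auto
          ultimately show ?thesis by (simp add: d_def)
        qed
        have KB: "Kker t m u * exp (u / t) \<le> T m"
          unfolding T_def r_def using K_bound[OF t _ d m0(2) ud] u by simp
        have "Kker t m u * norm (f u - f t) \<le> Kker t m u * (norm (f u) + norm (f t))"
          using K0 norm_triangle_ineq4 by (intro mult_left_mono) auto
        also have "\<dots> = (Kker t m u * exp (u / t)) * (exp (- (1/t) * u) * (norm (f u) + norm (f t)))"
        proof -
          have E: "exp (u / t) * exp (- (1/t) * u) = 1" by (subst mult_exp_exp) simp
          have "(Kker t m u * exp (u / t)) * (exp (- (1/t) * u) * (norm (f u) + norm (f t)))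
              = Kker t m u * (norm (f u) + norm (f t)) * (exp (u / t) * exp (- (1/t) * u))"
            by (simp only: mult_ac)
          thus ?thesis using E by simp
        qed
        also have "\<dots> \<le> T m * (exp (- (1/t) * u) * (norm (f u) + norm (f t)))"
          using KB by (intro mult_right_mono) auto
        also have "\<dots> = T m * W u" by (simp add: W_def algebra_simps)
        finally have X: "Kker t m u * norm (f u - f t) \<le> T m * W u" .
        moreover have "0 \<le> (\<epsilon>/2) * Kker t m u" using K0 \<epsilon> by simp
        ultimately show ?thesis unfolding nm by linarith
      qed
    qed
    also have "\<dots> = (\<epsilon>/2) * 1 + T m * A"
    proof -
      have ia: "(\<lambda>u. (\<epsilon>/2) * Kker t m u) integrable_on {0<..}"
        using Kint by (intro integrable_on_mult_right) (rule has_integral_integrable)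
      have ib: "(\<lambda>u. T m * W u) integrable_on {0<..}"
        using Wint by (rule integrable_on_mult_right)
      show ?thesis
        by (simp only: integral_add[OF ia ib] integral_mult_right integral_unique[OF Kint] A_def)
    qed
    also have "\<dots> < \<epsilon>"
    proof -
      have "T m * A \<le> T m * (A + 1)" using Tm(2) by (intro mult_left_mono) auto
      also have "\<dots> < \<epsilon> / 2" using Tm(1) A by (subst (asm) pos_less_divide_eq) auto
      finally show ?thesis by simp
    qed
    finally show "norm (integral {0<..} (\<lambda>u. of_real (Kker t m u) * f u) - f t) < \<epsilon>" .
  qed
qed

lemma deriv_Phi:
  assumes LF: "\<And>s. Re s > 0 \<Longrightarrow> F s = LPhi 0 s" and s: "Re s > 0"
  shows "(deriv ^^ m) F s = (-1) ^ m * LPhi m s"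
  using s
proof (induction m arbitrary: s)
  case 0
  then show ?case by (simp add: LF)
next
  case (Suc m)
  have ev: "eventually (\<lambda>z. (deriv ^^ m) F z = (-1) ^ m * LPhi m z) (nhds s)"
  proof -
    have "eventually (\<lambda>z. z \<in> {z. Re z > 0}) (nhds s)"
      using Suc.prems open_halfplane by (intro eventually_nhds_in_open) auto
    thus ?thesis by eventually_elim (use Suc.IH in auto)
  qed
  have "(deriv ^^ Suc m) F s = deriv ((deriv ^^ m) F) s" by simp
  also have "\<dots> = deriv (\<lambda>z. (-1) ^ m * LPhi m z) s" by (rule deriv_cong_ev[OF ev refl])
  also have "\<dots> = (-1) ^ m * (- LPhi (Suc m) s)"
    by (rule DERIV_imp_deriv, rule DERIV_cmult, rule Phi_deriv[OF Suc.prems])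
  finally show ?case by simp
qed

end


lemma B_lim:
  fixes c t :: real assumes c: "c > 0" and t: "t > 0"
  shows "(\<lambda>m. pochhammer c m / fact m * real m powr (1 - c) * t powr (c - 1)) \<longlonglongrightarrow> t powr (c - 1) / Gamma c"
proof -
  have ev: "eventually (\<lambda>m. rGamma_series c m * (real m / (c + real m)) * t powr (c - 1) =
      pochhammer c m / fact m * real m powr (1 - c) * t powr (c - 1)) sequentially"
  proof (rule eventually_sequentiallyI[of 1])
    fix m :: nat assume m: "m \<ge> 1"
    have cm: "c + real m > 0" using c by simp
    have mp: "real m powr (1 - c) = real m / real m powr c"
      using m by (simp add: powr_diff)
    have "rGamma_series c m * (real m / (c + real m)) =
        pochhammer c m * (c + real m) / (fact m * real m powr c) * (real m / (c + real m))"
      using m by (simp add: rGamma_series_def pochhammer_Suc powr_def)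
    also have "\<dots> = pochhammer c m / fact m * real m powr (1 - c)"
    proof -
      have gen: "x \<noteq> 0 \<Longrightarrow> p * x / (q * w) * (y / x) = p / q * (y / w)" for p x q w y :: real
        by (simp add: field_simps)
      show ?thesis unfolding mp using cm by (intro gen) simp
    qed
    finally show "rGamma_series c m * (real m / (c + real m)) * t powr (c - 1) =
      pochhammer c m / fact m * real m powr (1 - c) * t powr (c - 1)" by simp
  qed
  have "(\<lambda>m. rGamma_series c m * (real m / (c + real m)) * t powr (c - 1)) \<longlonglongrightarrow> rGamma c * 1 * t powr (c - 1)"
  proof (intro tendsto_mult tendsto_const rGamma_series_LIMSEQ)
    show "(\<lambda>m. real m / (c + real m)) \<longlonglongrightarrow> 1" using c by real_asymp
  qed
  hence "(\<lambda>m. rGamma_series c m * (real m / (c + real m)) * t powr (c - 1)) \<longlonglongrightarrow> t powr (c - 1) / Gamma c"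
    by (simp add: rGamma_inverse_Gamma divide_inverse mult.commute)
  thus ?thesis using ev by (rule Lim_transform_eventually)
qed

theorem lemma11:
  fixes n :: nat and a :: "nat \<Rightarrow> real" and k :: real and f :: "real \<Rightarrow> complex"
  assumes "n > 0" and "k > 0"
    and "is_inverse_laplace f (F_nk n k a)"
  shows "\<forall>t>0. norm (f t) \<le> t powr (real n * k - 1) / Gamma (real n * k)"
proof (intro allI impI)
  fix t :: real assume t: "t > 0"
  define c where "c = real n * k"
  have c: "c > 0" using assms by (simp add: c_def)
  have cont: "continuous_on {0<..} f" and H: "\<And>s. Re s > 0 \<Longrightarrow>
        (\<lambda>t. exp (- s * of_real t) * f t) absolutely_integrable_on {0<..} \<and>
        integral {0<..} (\<lambda>t. exp (- s * of_real t) * f t) = F_nk n k a s"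
    using assms(3) unfolding is_inverse_laplace_def by auto
  have AI: "\<And>s. Re s > 0 \<Longrightarrow> (\<lambda>t. exp (- s * of_real t) * f t) absolutely_integrable_on {0<..}"
    using H by blast
  have LF: "F_nk n k a s = LPhi f 0 s" if s: "Re s > 0" for s
  proof -
    have "integral {0<..} (\<lambda>t. exp (- s * of_real t) * f t) = F_nk n k a s" using H[OF s] by blast
    moreover have "LPhi f 0 s = integral {0<..} (\<lambda>t. exp (- s * of_real t) * f t)"
      using LPhi_def[OF cont AI, of 0 s] by simp
    ultimately show ?thesis by simp
  qed
  define Q where "Q = (\<lambda>m. integral {0<..} (\<lambda>u. of_real (Kker t m u) * f u))"
  have Qlim: "(\<lambda>m. norm (Q m)) \<longlonglongrightarrow> norm (f t)"
    unfolding Q_def by (intro tendsto_norm PW[OF cont AI t])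
  define B where "B = (\<lambda>m. pochhammer c m / fact m * real m powr (1 - c) * t powr (c - 1))"
  have Blim: "B \<longlonglongrightarrow> t powr (c - 1) / Gamma c"
    unfolding B_def by (rule B_lim[OF c t])
  have ev: "eventually (\<lambda>m. norm (Q m) \<le> B m) sequentially"
  proof (rule eventually_sequentiallyI[of 1])
    fix m :: nat assume m: "m \<ge> 1"
    define l where "l = real m / t"
    have l: "l > 0" using m t by (simp add: l_def)
    have "Q m = of_real (l ^ Suc m / fact m) * LPhi f m (of_real l)"
      unfolding Q_def l_def by (rule Q_eq[OF cont AI t])
    also have "LPhi f m (of_real l) = (-1) ^ m * (deriv ^^ m) (F_nk n k a) (of_real l)"
      using deriv_Phi[OF cont AI LF, of "of_real l" m] l by simp
    finally have "norm (Q m) = l ^ Suc m / fact m * norm ((deriv ^^ m) (F_nk n k a) (of_real l))"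
      using l by (simp add: norm_mult norm_power norm_divide)
    also have "\<dots> \<le> l ^ Suc m / fact m * (pochhammer c m * l powr (- c - real m))"
      using Fder_bound[OF l, of k m n a] assms(2) l by (intro mult_left_mono) (auto simp: c_def)
    also have "\<dots> = pochhammer c m / fact m * (l powr (real (Suc m)) * l powr (- c - real m))"
      using l powr_realpow[OF l, of "Suc m"] by simp
    also have "l powr (real (Suc m)) * l powr (- c - real m) = l powr (1 - c)"
      using l by (simp add: powr_add[symmetric])
    also have "l powr (1 - c) = real m powr (1 - c) * t powr (c - 1)"
    proof -
      have "l powr (1 - c) = real m powr (1 - c) / t powr (1 - c)"
        unfolding l_def using t by (intro powr_divide)
      moreover have "t powr (c - 1) = inverse (t powr (1 - c))"
        using powr_minus[of t "1 - c"] by simp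
      ultimately show ?thesis by (simp add: divide_inverse)
    qed
    finally show "norm (Q m) \<le> B m" by (simp add: B_def mult.assoc)
  qed
  have "norm (f t) \<le> t powr (c - 1) / Gamma c"
    by (rule tendsto_le[OF trivial_limit_sequentially Blim Qlim ev])
  thus "norm (f t) \<le> t powr (real n * k - 1) / Gamma (real n * k)" by (simp add: c_def)
qed

end
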